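(* Let $S$ be a relation algebra and $\# : S\to\mathbb{N}\cup\{\infty\}$ a function. Consider the properties (C1a) $\#\bot=0$; (C1b) $\forall x:\ \#x=0\iff x=\bot$; (C4a) $\forall x,y:\ \#x+\#y=\#(x\sqcup y)+\#(x\sqcap y)$; (C4b) $\forall x,y:\ x\sqsubseteq y\implies\#x\le\#y$; (C7a) $\forall x:\ \#x=\#\top\iff x=\top$; (C9) $\#\top\neq\infty$. Then: 1. (C1a) and (C4a) together imply (C4b). 2. (C1b), (C4a) and (C9) together imply (C7a).
   Context: A Stone relation algebra is a structure $(S,\sqcup,\sqcap,\cdot,\overline{\,\cdot\,},{}^{\smile},\bot,\top,1)$ (write $xy$ for $x\cdot y$, $\overline{x}$ for the pseudocomplement, $x^{\smile}$ for the converse) such that: $(S,\sqcup,\sqcap,\bot,\top)$ is a bounded distributive lattice with order $x\sqsubseteq y\iff x\sqcup y=y$; $x\sqcap y=\bot\iff x\sqsubseteq\overline{y}$; $\overline{x}\sqcup\overline{\overline{x}}=\top$; $\cdot$ is associative with two-sided unit $1$, distributes over $\sqcup$ on both sides, and $\bot$ is a zero of $\cdot$; $x^{\smile\smile}=x$, $(xy)^{\smile}=y^{\smile}x^{\smile}$, $(x\sqcup y)^{\smile}=x^{\smile}\sqcup y^{\smile}$; $\overline{\overline{1}}=1$; $\overline{\overline{xy}}=\overline{\overline{x}}\,\overline{\overline{y}}$; $xy\sqcap z\sqsubseteq x(y\sqcap x^{\smile}z)$. A relation algebra is a Stone relation algebra with $\overline{\overline{x}}=x$ for all $x$. Arithmetic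 in $\mathbb{N}\cup\{\infty\}$ is the usual one with $n+\infty=\infty+n=\infty$, $n\le\infty$. *)

theory Defs
  imports Main "HOL-Library.Extended_Nat"
begin

text \<open>The order is x \<sqsubseteq> y iff join x y = y.\<close>

definition stone_relation_algebra ::
  "('a \<Rightarrow> 'a \<Rightarrow> 'a) \<Rightarrow> ('a \<Rightarrow> 'a \<Rightarrow> 'a) \<Rightarrow> ('a \<Rightarrow> 'a \<Rightarrow> 'a) \<Rightarrow>
   ('a \<Rightarrow> 'a) \<Rightarrow> ('a \<Rightarrow> 'a) \<Rightarrow> 'a \<Rightarrow> 'a \<Rightarrow> 'a \<Rightarrow> bool" where
  "stone_relation_algebra join meet mult pc conv bt tp un \<longleftrightarrow>
     \<comment> \<open>bounded distributive lattice\<close>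
     (\<forall>x y z. join x (join y z) = join (join x y) z) \<and>
     (\<forall>x y. join x y = join y x) \<and>
     (\<forall>x. join x x = x) \<and>
     (\<forall>x y z. meet x (meet y z) = meet (meet x y) z) \<and>
     (\<forall>x y. meet x y = meet y x) \<and>
     (\<forall>x. meet x x = x) \<and>
     (\<forall>x y. join x (meet x y) = x) \<and>
     (\<forall>x y. meet x (join x y) = x) \<and>
     (\<forall>x y z. meet x (join y z) = join (meet x y) (meet x z)) \<and>
     (\<forall>x. join x bt = x) \<and>
     (\<forall>x. meet x tp = x) \<and>
     \<comment> \<open>pseudocomplement and Stone axiom\<close>
     (\<forall>x y. meet x y = bt \<longleftrightarrow> join x (pc y) = pc y) \<and>
     (\<forall>x. join (pc x) (pc (pc x)) = tp) \<and>
     \<comment> \<open>composition: monoid, distributes over join, bt is zero\<close>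
     (\<forall>x y z. mult x (mult y z) = mult (mult x y) z) \<and>
     (\<forall>x. mult un x = x) \<and>
     (\<forall>x. mult x un = x) \<and>
     (\<forall>x y z. mult x (join y z) = join (mult x y) (mult x z)) \<and>
     (\<forall>x y z. mult (join x y) z = join (mult x z) (mult y z)) \<and>
     (\<forall>x. mult bt x = bt) \<and>
     (\<forall>x. mult x bt = bt) \<and>
     \<comment> \<open>converse\<close>
     (\<forall>x. conv (conv x) = x) \<and>
     (\<forall>x y. conv (mult x y) = mult (conv y) (conv x)) \<and>
     (\<forall>x y. conv (join x y) = join (conv x) (conv y)) \<and>
     \<comment> \<open>remaining axioms\<close>
     pc (pc un) = un \<and>
     (\<forall>x y. pc (pc (mult x y)) = mult (pc (pc x)) (pc (pc y))) \<and>
     (\<forall>x y z. join (meet (mult x y) z) (mult x (meet y (mult (conv x) z)))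
                = mult x (meet y (mult (conv x) z)))"

definition relation_algebra ::
  "('a \<Rightarrow> 'a \<Rightarrow> 'a) \<Rightarrow> ('a \<Rightarrow> 'a \<Rightarrow> 'a) \<Rightarrow> ('a \<Rightarrow> 'a \<Rightarrow> 'a) \<Rightarrow>
   ('a \<Rightarrow> 'a) \<Rightarrow> ('a \<Rightarrow> 'a) \<Rightarrow> 'a \<Rightarrow> 'a \<Rightarrow> 'a \<Rightarrow> bool" where
  "relation_algebra join meet mult pc conv bt tp un \<longleftrightarrow>
     stone_relation_algebra join meet mult pc conv bt tp un \<and> (\<forall>x. pc (pc x) = x)"

end

theory Submission
  imports Defs
begin

theorem mainTheorem4:
  fixes join meet mult :: "'a \<Rightarrow> 'a \<Rightarrow> 'a"
    and pc conv :: "'a \<Rightarrow> 'a"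
    and bt tp un :: 'a
    and cnt :: "'a \<Rightarrow> enat"
  assumes "relation_algebra join meet mult pc conv bt tp un"
  shows "((cnt bt = 0 \<and> (\<forall>x y. cnt x + cnt y = cnt (join x y) + cnt (meet x y)))
            \<longrightarrow> (\<forall>x y. join x y = y \<longrightarrow> cnt x \<le> cnt y))
       \<and> (((\<forall>x. cnt x = 0 \<longleftrightarrow> x = bt)
            \<and> (\<forall>x y. cnt x + cnt y = cnt (join x y) + cnt (meet x y))
            \<and> cnt tp \<noteq> \<infinity>)
            \<longrightarrow> (\<forall>x. cnt x = cnt tp \<longleftrightarrow> x = tp))"
proof -
  note A = assms[unfolded relation_algebra_def stone_relation_algebra_def]
  have jc0: "\<forall>x y. join x y = join y x" using A by (elim conjE) assumption
  note jc = jc0[rule_format]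
  have mc0: "\<forall>x y. meet x y = meet y x" using A by (elim conjE) assumption
  note mc = mc0[rule_format]
  have ma0: "\<forall>x y z. meet x (meet y z) = meet (meet x y) z" using A by (elim conjE) assumption
  note ma = ma0[rule_format]
  have mabs0: "\<forall>x y. meet x (join x y) = x" using A by (elim conjE) assumption
  note mabs = mabs0[rule_format]
  have jabs0: "\<forall>x y. join x (meet x y) = x" using A by (elim conjE) assumption
  note jabs = jabs0[rule_format]
  have md0: "\<forall>x y z. meet x (join y z) = join (meet x y) (meet x z)" using A by (elim conjE) assumption
  note md = md0[rule_format]
  have jb0: "\<forall>x. join x bt = x" using A by (elim conjE) assumption
  note jb = jb0[rule_format]
  have mt0: "\<forall>x. meet x tp = x" using A by (elim conjE) assumption
  note mt = mt0[rule_format]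
  have pcax0: "\<forall>x y. meet x y = bt \<longleftrightarrow> join x (pc y) = pc y" using A by (elim conjE) assumption
  note pcax = pcax0[rule_format]
  have st0: "\<forall>x. join (pc x) (pc (pc x)) = tp" using A by (elim conjE) assumption
  note st = st0[rule_format]
  have pp0: "\<forall>x. pc (pc x) = x" using A by (elim conjE) assumption
  note pp = pp0[rule_format]
  have jxx0: "\<forall>x. join x x = x" using A by (elim conjE) assumption
  note jxx = jxx0[rule_format]
  have compl: "\<And>x. meet x (pc x) = bt"
  proof -
    fix x
    have "meet (pc x) x = bt" by (rule pcax[of "pc x" x, THEN iffD2], rule jxx)
    thus "meet x (pc x) = bt" by (subst mc)
  qed
  have jcompl: "\<And>x. join x (pc x) = tp"
  proof -
    fix x
    have "join (pc x) (pc (pc x)) = tp" by (rule st)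
    hence "join (pc x) x = tp" by (simp only: pp)
    thus "join x (pc x) = tp" by (subst jc)
  qed
  have mbt: "\<And>x. meet bt x = bt"
  proof -
    fix x
    have "meet bt (join bt x) = bt" by (rule mabs)
    moreover have "join bt x = x" by (subst jc, rule jb)
    ultimately show "meet bt x = bt" by simp
  qed
  have mbt2: "\<And>x. meet x bt = bt" by (subst mc, rule mbt)
  have pcbt: "pc bt = tp"
  proof -
    have "meet tp bt = bt" by (rule mbt2)
    hence "join tp (pc bt) = pc bt" by (rule pcax[THEN iffD1])
    moreover have "join tp (pc bt) = tp"
    proof -
      have "join tp (meet tp (pc bt)) = tp" by (rule jabs)
      moreover have "meet tp (pc bt) = pc bt" by (subst mc, rule mt)
      ultimately show ?thesis by simp
    qed
    ultimately show ?thesis by simp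
  qed
  show ?thesis
  proof (intro conjI impI allI iffI)
    fix x y
    assume H: "cnt bt = 0 \<and> (\<forall>x y. cnt x + cnt y = cnt (join x y) + cnt (meet x y))"
      and xy: "join x y = y"
    define z where "z = meet y (pc x)"
    have "meet x z = meet x (meet (pc x) y)" unfolding z_def by (simp only: mc[of y])
    also have "\<dots> = meet (meet x (pc x)) y" by (rule ma)
    also have "\<dots> = bt" by (simp only: compl mbt)
    finally have "meet x z = bt" .
    moreover have "join x z = y"
    proof -
      have "meet y x = x" using mc[of y x] mabs[of x y] xy by simp
      have "y = meet y (join x (pc x))" by (simp only: jcompl mt)
      also have "\<dots> = join x z" unfolding z_def by (simp only: md \<open>meet y x = x\<close>)
      finally show ?thesis by simp
    qed
    ultimately have "cnt x + cnt z = cnt y" using H by (metis add.right_neutral)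
    thus "cnt x \<le> cnt y" by (metis le_iff_add)
  next
    fix x
    assume "cnt x = cnt tp"
      and H: "(\<forall>x. cnt x = 0 \<longleftrightarrow> x = bt)
            \<and> (\<forall>x y. cnt x + cnt y = cnt (join x y) + cnt (meet x y))
            \<and> cnt tp \<noteq> \<infinity>"
    have "cnt x + cnt (pc x) = cnt tp + cnt bt" using H jcompl[of x] compl[of x] by metis
    hence e: "cnt tp + cnt (pc x) = cnt tp" using H \<open>cnt x = cnt tp\<close> by simp
    have "cnt (pc x) = 0"
    proof -
      obtain n where "cnt tp = enat n" using H by auto
      with e show ?thesis by (cases "cnt (pc x)") (auto simp: zero_enat_def)
    qed
    hence "pc x = bt" using H by blast
    hence "pc (pc x) = pc bt" by simp
    thus "x = tp" by (simp only: pp pcbt)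
  next
    fix x assume "x = tp" thus "cnt x = cnt tp" by simp
  qed
qed

end
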